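(* Let $A$ be a real $2\times 2$ matrix and $B$ a real $1\times 2$ matrix, and let $\mathrm{NT}=\{\vec{x}\in\mathbb{R}^2 : BA^k\vec{x}>0 \text{ for all integers } k\ge 0\}$. Suppose $\mathrm{NT}\neq\emptyset$, and let $\partial\mathrm{NT}$ denote its topological boundary in $\mathbb{R}^2$. If $\vec{x}\in\partial\mathrm{NT}$ and $B\vec{x}\neq 0$, then $A\vec{x}\in\partial\mathrm{NT}$.
   Context: $\mathrm{NT}$ is the non-termination set of the loop "while $(B\vec{x}>0)$ $\{\vec{x}:=A\vec{x}\}$", i.e. the set of inputs on which the loop never terminates. *)

theory Defs
  imports "HOL-Analysis.Analysis"
begin

text \<open>Non-termination set of the loop  while (B x > 0) { x := A x },
  with A a real 2x2 matrix and B a real 1x2 matrix; A^k x is written as the k-fold iterate of x |-> A x.\<close>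
definition NT :: "real^2^2 \<Rightarrow> real^2^1 \<Rightarrow> (real^2) set" where
  "NT A B = {x. \<forall>k::nat. (B *v (((\<lambda>y. A *v y) ^^ k) x)) $ 1 > 0}"

end

theory Submission
  imports Defs
begin

lemma NT_step: "NT A B = {y. (B *v y) $ 1 > 0 \<and> A *v y \<in> NT A B}"
proof (intro set_eqI iffI)
  fix y assume y: "y \<in> NT A B"
  have "(B *v y) $ 1 > 0" using y[unfolded NT_def] by (metis (mono_tags) mem_Collect_eq funpow_0)
  moreover have "A *v y \<in> NT A B"
    using y unfolding NT_def by (auto simp del: funpow.simps simp: funpow_Suc_right[symmetric] dest: spec[of _ "Suc _"])
      (metis comp_apply funpow_Suc_right)
  ultimately show "y \<in> {y. (B *v y) $ 1 > 0 \<and> A *v y \<in> NT A B}" by simp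
next
  fix y assume "y \<in> {y. (B *v y) $ 1 > 0 \<and> A *v y \<in> NT A B}"
  then have h: "(B *v y) $ 1 > 0" "\<forall>k. (B *v (((\<lambda>y. A *v y) ^^ k) (A *v y))) $ 1 > 0"
    unfolding NT_def by auto
  show "y \<in> NT A B" unfolding NT_def
  proof (safe)
    fix k show "(B *v (((\<lambda>y. A *v y) ^^ k) y)) $ 1 > 0"
      using h by (cases k) (auto simp del: funpow.simps simp: funpow_Suc_right)
  qed
qed

lemma contB: "continuous_on S (\<lambda>y::real^2. (B *v y) $ (1::1))"
  by (intro continuous_intros)

lemma contA: "continuous_on S (\<lambda>y::real^2. A *v y)"
  by (intro continuous_intros)

theorem lemma1:
  fixes A :: "real^2^2" and B :: "real^2^1" and x :: "real^2"
  assumes "NT A B \<noteq> {}"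
    and "x \<in> frontier (NT A B)"
    and "B *v x \<noteq> 0"
  shows "A *v x \<in> frontier (NT A B)"
proof -
  let ?N = "NT A B"
  have xc: "x \<in> closure ?N" and xi: "x \<notin> interior ?N" using assms(2) by (auto simp: frontier_def)
  have "(\<lambda>y. A *v y) ` ?N \<subseteq> ?N" using NT_step[of A B] by blast
  then have "(\<lambda>y. A *v y) ` closure ?N \<subseteq> closure ?N"
    by (intro image_closure_subset contA) (auto intro: closure_subset[THEN subsetD])
  then have Axc: "A *v x \<in> closure ?N" using xc by blast
  have "?N \<subseteq> {y. 0 \<le> (B *v y) $ 1}"
  proof
    fix y assume "y \<in> ?N"
    then have "y \<in> {y. (B *v y) $ 1 > 0 \<and> A *v y \<in> NT A B}" using NT_step[of A B] by simp
    then show "y \<in> {y. 0 \<le> (B *v y) $ 1}" by simp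
  qed
  moreover have "closed {y::real^2. 0 \<le> (B *v y) $ 1}"
    by (intro closed_Collect_le continuous_intros contB)
  ultimately have "closure ?N \<subseteq> {y. 0 \<le> (B *v y) $ 1}" by (rule closure_minimal)
  with xc have "0 \<le> (B *v x) $ 1" by blast
  moreover have "(B *v x) $ 1 \<noteq> 0"
  proof
    assume "(B *v x) $ 1 = 0"
    then have "B *v x = 0" by (simp add: vec_eq_iff)
    with assms(3) show False by simp
  qed
  ultimately have Bx: "0 < (B *v x) $ 1" by simp
  have "A *v x \<notin> interior ?N"
  proof
    assume Ai: "A *v x \<in> interior ?N"
    let ?T = "{y. 0 < (B *v y) $ 1} \<inter> ((\<lambda>y. A *v y) -` interior ?N)"
    have o1: "open {y::real^2. 0 < (B *v y) $ 1}"
      by (intro open_Collect_less continuous_intros contB)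
    have o2: "open ((\<lambda>y. A *v y) -` interior ?N)"
      by (intro open_vimage contA) simp
    have "open ?T" using o1 o2 by blast
    moreover have "x \<in> ?T" using Bx Ai by simp
    moreover have "?T \<subseteq> ?N"
    proof
      fix y assume "y \<in> ?T"
      then have "0 < (B *v y) $ 1" "A *v y \<in> ?N" using interior_subset by auto
      then show "y \<in> ?N" using NT_step[of A B] by blast
    qed
    ultimately have "x \<in> interior ?N" by (meson interior_maximal interior_open subsetD)
    with xi show False by simp
  qed
  with Axc show ?thesis by (simp add: frontier_def)
qed

end
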